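(* Let $X$ be a compact Hausdorff space with a continuous injective right action of $P$ such that $X\rtimes P$ admits a Haar system, and put $X_0:=X\,Int(P)=\{xb:x\in X,\ b\in Int(P)\}$. Let $a\in P$ and let $(U_n)$ be a decreasing sequence of open subsets of $G$ with $\bigcap_n U_n=\{a\}$ such that every open $U\ni a$ contains $U_n$ for all large $n$. For each $n$ choose $f_n\in C_c(G)$ with $f_n\ge 0$, $\int f_n(g)\,dg=1$ and $\mathrm{supp}(f_n)\subset U_n\cap Int(P)a$ (this set is nonempty), and define $F_n\in C(X)$ by $F_n(x)=\int f_n(g)1_{Q_x}(g^{-1})\,dg$. Then $F_n$ converges pointwise on $X$ to the indicator function $1_{X_0a}$ of $X_0a=\{ya:y\in X_0\}$.
   Context: Standing assumptions: $G$ is a second countable locally compact group with left Haar measure $dg$; $P\subset G$ is a closed subsemigroup with identity $e\in P$, such that $G=PP^{-1}$ and the interior $Int(P)$ of $P$ is dense in $P$. Semidirect product groupoid: for a compact Hausdorff space $X$ with a continuous right action of $P$ such that each $x\mapsto xa$ is injective, $X\rtimes P:=\{(x,g)\in X\times G:\exists a,b\in P,\ y\in X \text{ with } g=ab^{-1},\ xa=yb\}$ (the point $y$ is then unique; write $(x,g,y)$), with the subspace topology of $X\times G$, product $(x,g,y)(y,h,z)=(x,gh,z)$ and inverse $(x,g,y)^{-1}=(y,g^{-1},x)$. For $x\in X$, $Q_x:=\{g\in G:(x,g)\in X\rtimes P\}$ and $\lambda^x$ is the measure with $\int\phi\,d\lambda^x=\int\phi(x,g)1_{Q_x}(g)\,dg$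 for $\phi\in C_c(X\rtimes P)$. "$X\rtimes P$ admits a Haar system" means $(\lambda^x)_{x\in X}$ is a Haar system, i.e. $x\mapsto\int\phi\,d\lambda^x$ is continuous for all $\phi\in C_c(X\rtimes P)$. *)

theory Defs
  imports "HOL-Analysis.Analysis"
begin

text \<open>Group G is a type of class topological_group_add (NOT assumed commutative);
 the group law is written additively: g + h is the product gh, - g the inverse, 0 = e.\<close>

definition left_haar_measure :: "'g::topological_group_add measure \<Rightarrow> bool" where
  "left_haar_measure \<mu> \<longleftrightarrow>
     sets \<mu> = sets borel \<and>
     (\<forall>g A. A \<in> sets borel \<longrightarrow> emeasure \<mu> ((\<lambda>h. g + h) ` A) = emeasure \<mu> A) \<and>
     (\<forall>K. compact K \<longrightarrow> emeasure \<mu> K < \<infinity>) \<and>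
     (\<forall>U. open U \<and> U \<noteq> {} \<longrightarrow> emeasure \<mu> U > 0)"

definition standing_semigroup :: "'g::topological_group_add set \<Rightarrow> bool" where
  "standing_semigroup P \<longleftrightarrow> closed P \<and> 0 \<in> P \<and> (\<forall>a\<in>P. \<forall>b\<in>P. a + b \<in> P) \<and>
     {a + - b | a b. a \<in> P \<and> b \<in> P} = UNIV \<and> P \<subseteq> closure (interior P)"

definition injective_right_action :: "'g::topological_group_add set \<Rightarrow> ('x::topological_space \<Rightarrow> 'g \<Rightarrow> 'x) \<Rightarrow> bool" where
  "injective_right_action P act \<longleftrightarrow>
     (\<forall>x. act x 0 = x) \<and>
     (\<forall>x. \<forall>a\<in>P. \<forall>b\<in>P. act (act x a) b = act x (a + b)) \<and>
     continuous_on (UNIV \<times> P) (\<lambda>(x, a). act x a) \<and>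
     (\<forall>a\<in>P. inj (\<lambda>x. act x a))"

definition semidirect :: "'g::group_add set \<Rightarrow> ('x \<Rightarrow> 'g \<Rightarrow> 'x) \<Rightarrow> ('x \<times> 'g) set" where
  "semidirect P act = {(x, g). \<exists>a\<in>P. \<exists>b\<in>P. \<exists>y. g = a + - b \<and> act x a = act y b}"

definition Qset :: "'g::group_add set \<Rightarrow> ('x \<Rightarrow> 'g \<Rightarrow> 'x) \<Rightarrow> 'x \<Rightarrow> 'g set" where
  "Qset P act x = {g. (x, g) \<in> semidirect P act}"

definition Cc_on :: "'a::topological_space set \<Rightarrow> ('a \<Rightarrow> complex) \<Rightarrow> bool" where
  "Cc_on S \<phi> \<longleftrightarrow> continuous_on S \<phi> \<and> (\<exists>K. compact K \<and> K \<subseteq> S \<and> (\<forall>p\<in>S - K. \<phi> p = 0))"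

definition admits_haar_system :: "'g::topological_group_add measure \<Rightarrow> 'g set \<Rightarrow> ('x::topological_space \<Rightarrow> 'g \<Rightarrow> 'x) \<Rightarrow> bool" where
  "admits_haar_system \<mu> P act \<longleftrightarrow>
     (\<forall>\<phi>. Cc_on (semidirect P act) \<phi> \<longrightarrow>
        continuous_on UNIV (\<lambda>x. \<integral>g. indicator (Qset P act x) g * \<phi> (x, g) \<partial>\<mu>))"

definition support_of :: "('a::topological_space \<Rightarrow> real) \<Rightarrow> 'a set" where
  "support_of f = closure {g. f g \<noteq> 0}"

end

theory Submission
  imports Defs
begin

theorem mainTheorem11:
  fixes \<mu> :: "'g::{topological_group_add, t2_space, second_countable_topology} measure"
    and P :: "'g set"
    and act :: "'x::t2_space \<Rightarrow> 'g \<Rightarrow> 'x"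
    and a :: 'g
    and U :: "nat \<Rightarrow> 'g set"
    and f :: "nat \<Rightarrow> 'g \<Rightarrow> real"
  assumes Xcpt: "compact (UNIV :: 'x set)"
    and lc: "locally_compact_space (euclidean :: 'g topology)"
    and haar: "left_haar_measure \<mu>"
    and semi: "standing_semigroup P"
    and action: "injective_right_action P act"
    and hs: "admits_haar_system \<mu> P act"
    and aP: "a \<in> P"
    and Uopen: "\<And>n. open (U n)"
    and Udec: "decseq U"
    and Uint: "(\<Inter>n. U n) = {a}"
    and Ubasis: "\<And>V. open V \<Longrightarrow> a \<in> V \<Longrightarrow> eventually (\<lambda>n. U n \<subseteq> V) sequentially"
    and fcont: "\<And>n. continuous_on UNIV (f n)"
    and fcpt: "\<And>n. compact (support_of (f n))"
    and fnonneg: "\<And>n g. f n g \<ge> 0"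
    and fint: "\<And>n. integral\<^sup>L \<mu> (f n) = 1"
    and fsupp: "\<And>n. support_of (f n) \<subseteq> U n \<inter> (\<lambda>b. b + a) ` interior P"
  shows "\<forall>x. (\<lambda>n. \<integral>g. f n g * indicator (Qset P act x) (- g) \<partial>\<mu>)
             \<longlonglongrightarrow> indicator {act y a | y. y \<in> {act z b | z b. b \<in> interior P}} x"
proof
  fix x
  have Pint: "interior P \<subseteq> P" by (rule interior_subset)
  have Padd: "\<And>p q. p \<in> P \<Longrightarrow> q \<in> P \<Longrightarrow> p + q \<in> P"
    using semi unfolding standing_semigroup_def by blast
  have P0: "0 \<in> P" using semi unfolding standing_semigroup_def by blast
  have comp: "\<And>z p q. p \<in> P \<Longrightarrow> q \<in> P \<Longrightarrow> act (act z p) q = act z (p + q)"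
    using action unfolding injective_right_action_def by blast
  have act0: "\<And>z. act z 0 = z"
    using action unfolding injective_right_action_def by blast
  have injp: "\<And>p. p \<in> P \<Longrightarrow> inj (\<lambda>z. act z p)"
    using action unfolding injective_right_action_def by blast
  have nzz: "\<And>n g. f n g \<noteq> 0 \<Longrightarrow> g \<in> support_of (f n)"
  proof -
    fix n g assume "f n g \<noteq> 0"
    hence "g \<in> {g. f n g \<noteq> 0}" by simp
    also have "{g. f n g \<noteq> 0} \<subseteq> closure {g. f n g \<noteq> 0}" by (rule closure_subset)
    finally show "g \<in> support_of (f n)" unfolding support_of_def .
  qed
  have nz: "\<And>n g. f n g \<noteq> 0 \<Longrightarrow> \<exists>c\<in>interior P. g = c + a"
  proof -
    fix n g assume "f n g \<noteq> 0"
    hence "g \<in> support_of (f n)" using nzz by blast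
    thus "\<exists>c\<in>interior P. g = c + a" using fsupp by blast
  qed
  let ?T = "{act y a | y. y \<in> {act z b | z b. b \<in> interior P}}"
  show "(\<lambda>n. \<integral>g. f n g * indicator (Qset P act x) (- g) \<partial>\<mu>) \<longlonglongrightarrow> indicator ?T x"
  proof (cases "x \<in> ?T")
    case False
    have zero: "\<And>n g. f n g * indicator (Qset P act x) (- g) = 0"
    proof -
      fix n g
      show "f n g * indicator (Qset P act x) (- g) = 0"
      proof (rule ccontr)
        assume "f n g * indicator (Qset P act x) (- g) \<noteq> 0"
        hence fg: "f n g \<noteq> 0" and Q: "- g \<in> Qset P act x" by (auto simp: indicator_def split: if_splits)
        obtain c where c: "c \<in> interior P" "g = c + a" using nz[OF fg] by blast
        obtain p q y where pq: "p \<in> P" "q \<in> P" "- g = p + - q" "act x p = act y q"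
          using Q unfolding Qset_def semidirect_def by blast
        have "g + (- g) + q = g + (p + - q) + q" using pq(3) by simp
        hence "q = g + p" by (simp add: add.assoc)
        hence q: "q = c + a + p" using c by simp
        have cP: "c \<in> P" using c Pint by blast
        have "act (act (act y c) a) p = act (act y (c + a)) p" using comp cP aP by simp
        also have "\<dots> = act y (c + a + p)" using comp Padd[OF cP aP] pq(1) by simp
        finally have "act y q = act (act (act y c) a) p" using q by simp
        hence "act x p = act (act (act y c) a) p" using pq(4) by simp
        hence "x = act (act y c) a" using injp[OF pq(1)] by (auto dest: injD)
        hence "x \<in> ?T" using c(1) by blast
        thus False using False by simp
      qed
    qed
    have z: "\<And>n. (\<integral>g. f n g * indicator (Qset P act x) (- g) \<partial>\<mu>) = 0" by (simp only: zero integral_zero)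
    have "indicator ?T x = (0::real)" using False by simp
    thus ?thesis unfolding z by simp
  next
    case True
    then obtain z b where zb: "b \<in> interior P" "x = act (act z b) a" by blast
    define V where "V = {g. b + - (g + - a) \<in> interior P}"
    have "continuous_on UNIV (\<lambda>g. b + - (g + - a))" by (intro continuous_intros)
    hence "open V" unfolding V_def
      using open_vimage[of "interior P" "\<lambda>g. b + - (g + - a)"] by (simp add: vimage_def)
    moreover have "a \<in> V" unfolding V_def using zb by simp
    ultimately have ev: "eventually (\<lambda>n. U n \<subseteq> V) sequentially" using Ubasis by blast
    have "eventually (\<lambda>n. (\<integral>g. f n g * indicator (Qset P act x) (- g) \<partial>\<mu>) = indicator ?T x) sequentially"
      using ev
    proof eventually_elim
      case (elim n)
      have one: "\<And>g. f n g * indicator (Qset P act x) (- g) = f n g"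
      proof -
        fix g
        show "f n g * indicator (Qset P act x) (- g) = f n g"
        proof (cases "f n g = 0")
          case False
          obtain c where c: "c \<in> interior P" "g = c + a" using nz[OF False] by blast
          have "g \<in> support_of (f n)" using nzz False by blast
          hence "g \<in> V" using fsupp elim by blast
          hence "b + - (g + - a) \<in> interior P" unfolding V_def by simp
          moreover have "g + - a = c" using c(2) by (simp add: add.assoc)
          ultimately have "b + - c \<in> interior P" by (simp only:)
          hence bc: "b + - c \<in> P" using Pint by blast
          have cP: "c \<in> P" using c Pint by blast
          have bP: "b \<in> P" using zb Pint by blast
          have caP: "c + a \<in> P" using Padd cP aP by blast
          have e1: "act (act z (b + - c)) (c + a) = act z (b + - c + (c + a))"
            using comp bc caP by blast
          have e2: "b + - c + (c + a) = b + a" by (simp add: add.assoc[symmetric])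
          have e3: "act z (b + a) = x" using zb comp bP aP by simp
          have e: "act x 0 = act (act z (b + - c)) (c + a)" using act0 e1 e2 e3 by simp
          have "- g = 0 + - (c + a)" using c by simp
          hence "- g \<in> Qset P act x" unfolding Qset_def semidirect_def
            using e P0 caP by blast
          thus ?thesis by simp
        qed simp
      qed
      have "(\<integral>g. f n g * indicator (Qset P act x) (- g) \<partial>\<mu>) = integral\<^sup>L \<mu> (f n)"
        by (simp only: one)
      hence "(\<integral>g. f n g * indicator (Qset P act x) (- g) \<partial>\<mu>) = 1" using fint by simp
      thus ?case using True by simp
    qed
    thus ?thesis by (rule tendsto_eventually)
  qed
qed

end
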